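(* Let $n\ge 3$ and let $k=n \bmod 4$. Under optimal play, the Sign Game on the cycle graph $C_n$ results in: a draw if $k=0$; a win for Player P if $k=1$; a win for Player 2 if $k=2$; a win for Player N if $k=3$.
   Context: The Sign Game on a finite simple undirected graph $G$: two players, Player P and Player N, alternate turns; the player who moves first is called Player 1 and the other Player 2 (either of P, N may be Player 1). On a turn, a player chooses a vertex of $G$ not yet assigned a value and assigns it $+1$ or $-1$. The game ends when every vertex has been assigned. The score of an edge $uv$ is the product of the values of $u$ and $v$, and the score $s(G)$ of the game is the sum of the scores of all edges. Player P wins if $s(G)>0$, Player N wins if $s(G)<0$, and the game is a draw if $s(G)=0$. "Under optimal play" means both players play optimally, each with primary goal of winning and secondary goal of at least drawing; the result is the outcome of this finite perfect-information game under such play, regardless of which of P, N moves first unless the result is stated in terms of Player 1/Player 2. The cycle graph $C_n$ ($n\ge 3$) has vertices $v_1,\dots,v_n$ and edges $v_iv_{i+1}$ for $1\le i\le n-1$ together with $v_nv_1$. *)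

theory Defs
  imports Main
begin

text \<open>An assignment is a function
  f :: nat \<Rightarrow> int with f v \<in> {1,-1} for assigned vertices and f v = 0 for
  unassigned ones.\<close>

definition sg_score :: "nat set set \<Rightarrow> (nat \<Rightarrow> int) \<Rightarrow> int" where
  "sg_score E f = (\<Sum>e\<in>E. \<Prod>v\<in>e. f v)"

text \<open>Minimax value of the game with m moves remaining; pturn = True means Player P is
  to move. Player P maximises and Player N minimises the outcome sgn(score)
  (1 = P wins, 0 = draw, -1 = N wins), which encodes "win first, draw second".\<close>

primrec sg_val :: "nat \<Rightarrow> nat set \<Rightarrow> nat set set \<Rightarrow> bool \<Rightarrow> (nat \<Rightarrow> int) \<Rightarrow> int" where
  "sg_val 0 V E pturn f = sgn (sg_score E f)"
| "sg_val (Suc m) V E pturn f =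
     (let opts = {sg_val m V E (\<not> pturn) (f(v := s)) | v s. v \<in> V \<and> f v = 0 \<and> s \<in> {1, -1}}
      in if pturn then Max opts else Min opts)"

definition sign_game_outcome :: "nat set \<Rightarrow> nat set set \<Rightarrow> bool \<Rightarrow> int" where
  "sign_game_outcome V E p_first = sg_val (card V) V E p_first (\<lambda>_. 0)"

definition cycle_vertices :: "nat \<Rightarrow> nat set" where
  "cycle_vertices n = {0..<n}"

definition cycle_edges :: "nat \<Rightarrow> nat set set" where
  "cycle_edges n = {{i, (i + 1) mod n} | i. i < n}"

end

theory Submission
  imports Defs
begin


lemma opts_fin: "finite V \<Longrightarrow> finite {sg_val m V E pt (f(v := s)) | v s. v \<in> V \<and> f v = 0 \<and> s \<in> {1, -1}}"
  by (rule finite_subset[of _ "(\<lambda>(v,s). sg_val m V E pt (f(v:=s))) ` (V \<times> {1,-1})"]) auto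

lemma Pmove_ge:
  assumes "finite V" "v \<in> V" "f v = 0" "s \<in> {1,-1}" "c \<le> sg_val m V E False (f(v:=s))"
  shows "c \<le> sg_val (Suc m) V E True f"
proof -
  let ?O = "{sg_val m V E False (f(v := s)) | v s. v \<in> V \<and> f v = 0 \<and> s \<in> {1, -1}}"
  have m: "sg_val m V E False (f(v:=s)) \<in> ?O" using assms by blast
  hence "c \<le> Max ?O" using opts_fin[OF assms(1)] assms(5) by (subst Max_ge_iff) auto
  thus ?thesis by (simp add: Let_def)
qed

lemma Nmove_le:
  assumes "finite V" "v \<in> V" "f v = 0" "s \<in> {1,-1}" "sg_val m V E True (f(v:=s)) \<le> c"
  shows "sg_val (Suc m) V E False f \<le> c"
proof -
  let ?O = "{sg_val m V E True (f(v := s)) | v s. v \<in> V \<and> f v = 0 \<and> s \<in> {1, -1}}"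
  have m: "sg_val m V E True (f(v:=s)) \<in> ?O" using assms by blast
  hence "Min ?O \<le> c" using opts_fin[OF assms(1)] assms(5) by (subst Min_le_iff) auto
  thus ?thesis by (simp add: Let_def)
qed

lemma Nmove_ge:
  assumes "finite V" "v \<in> V" "f v = 0"
    "\<And>v s. v \<in> V \<Longrightarrow> f v = 0 \<Longrightarrow> s \<in> {1,-1} \<Longrightarrow> c \<le> sg_val m V E True (f(v:=s))"
  shows "c \<le> sg_val (Suc m) V E False f"
proof -
  let ?O = "{sg_val m V E True (f(v := s)) | v s. v \<in> V \<and> f v = 0 \<and> s \<in> {1, -1}}"
  have m: "sg_val m V E True (f(v:=1)) \<in> ?O" using assms by blast
  hence "c \<le> Min ?O" using opts_fin[OF assms(1)] assms(4) by (subst Min_ge_iff) auto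
  thus ?thesis by (simp add: Let_def)
qed

lemma Pmove_le:
  assumes "finite V" "v \<in> V" "f v = 0"
    "\<And>v s. v \<in> V \<Longrightarrow> f v = 0 \<Longrightarrow> s \<in> {1,-1} \<Longrightarrow> sg_val m V E False (f(v:=s)) \<le> c"
  shows "sg_val (Suc m) V E True f \<le> c"
proof -
  let ?O = "{sg_val m V E False (f(v := s)) | v s. v \<in> V \<and> f v = 0 \<and> s \<in> {1, -1}}"
  have m: "sg_val m V E False (f(v:=1)) \<in> ?O" using assms by blast
  hence "Max ?O \<le> c" using opts_fin[OF assms(1)] assms(4) by (subst Max_le_iff) auto
  thus ?thesis by (simp add: Let_def)
qed

definition agr :: "nat \<Rightarrow> (nat \<Rightarrow> int) \<Rightarrow> nat" where
  "agr n f = card {i. i < n \<and> f i \<noteq> 0 \<and> f i = f (Suc i mod n)}"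
definition dis :: "nat \<Rightarrow> (nat \<Rightarrow> int) \<Rightarrow> nat" where
  "dis n f = card {i. i < n \<and> f i \<noteq> 0 \<and> f (Suc i mod n) \<noteq> 0 \<and> f i \<noteq> f (Suc i mod n)}"
definition unas :: "nat \<Rightarrow> (nat \<Rightarrow> int) \<Rightarrow> nat set" where
  "unas n f = {v. v < n \<and> f v = 0}"

lemma unas_fin: "finite (unas n f)"
  unfolding unas_def by auto

lemma unas_upd: "f v = 0 \<Longrightarrow> v < n \<Longrightarrow> s \<noteq> 0 \<Longrightarrow> unas n (f(v:=s)) = unas n f - {v}"
  unfolding unas_def by auto

lemma agr_mono: assumes H: "\<And>v. f v \<noteq> 0 \<Longrightarrow> g v = f v" shows "agr n f \<le> agr n g"
  unfolding agr_def
proof (rule card_mono)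
  show "finite {i. i < n \<and> g i \<noteq> 0 \<and> g i = g (Suc i mod n)}" by simp
  show "{i. i < n \<and> f i \<noteq> 0 \<and> f i = f (Suc i mod n)} \<subseteq> {i. i < n \<and> g i \<noteq> 0 \<and> g i = g (Suc i mod n)}"
    using H by (auto; metis)
qed

lemma dis_mono: assumes H: "\<And>v. f v \<noteq> 0 \<Longrightarrow> g v = f v" shows "dis n f \<le> dis n g"
  unfolding dis_def
proof (rule card_mono)
  show "finite {i. i < n \<and> g i \<noteq> 0 \<and> g (Suc i mod n) \<noteq> 0 \<and> g i \<noteq> g (Suc i mod n)}" by simp
  show "{i. i < n \<and> f i \<noteq> 0 \<and> f (Suc i mod n) \<noteq> 0 \<and> f i \<noteq> f (Suc i mod n)} \<subseteq> {i. i < n \<and> g i \<noteq> 0 \<and> g (Suc i mod n) \<noteq> 0 \<and> g i \<noteq> g (Suc i mod n)}"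
    using H by (auto; metis)
qed

lemma agr_step:
  assumes "i < n" "f i \<noteq> 0" "f (Suc i mod n) = 0"
  shows "agr n f + 1 \<le> agr n (f(Suc i mod n := f i))"
proof -
  let ?g = "f(Suc i mod n := f i)"
  have ne: "i \<noteq> Suc i mod n" using assms by auto
  have sub: "{i. i < n \<and> f i \<noteq> 0 \<and> f i = f (Suc i mod n)} \<subset> {j. j < n \<and> ?g j \<noteq> 0 \<and> ?g j = ?g (Suc j mod n)}"
  proof
    show "{i. i < n \<and> f i \<noteq> 0 \<and> f i = f (Suc i mod n)} \<subseteq> {j. j < n \<and> ?g j \<noteq> 0 \<and> ?g j = ?g (Suc j mod n)}"
      using assms by auto
    have "i \<in> {j. j < n \<and> ?g j \<noteq> 0 \<and> ?g j = ?g (Suc j mod n)}" using assms ne by auto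
    moreover have "i \<notin> {i. i < n \<and> f i \<noteq> 0 \<and> f i = f (Suc i mod n)}" using assms by auto
    ultimately show "{i. i < n \<and> f i \<noteq> 0 \<and> f i = f (Suc i mod n)} \<noteq> {j. j < n \<and> ?g j \<noteq> 0 \<and> ?g j = ?g (Suc j mod n)}" by blast
  qed
  have "agr n f < agr n ?g" unfolding agr_def by (rule psubset_card_mono[OF _ sub]) auto
  thus ?thesis by simp
qed

lemma dis_step:
  assumes "i < n" "f i \<noteq> 0" "f (Suc i mod n) = 0"
  shows "dis n f + 1 \<le> dis n (f(Suc i mod n := - f i))"
proof -
  let ?g = "f(Suc i mod n := - f i)"
  let ?A = "{i. i < n \<and> f i \<noteq> 0 \<and> f (Suc i mod n) \<noteq> 0 \<and> f i \<noteq> f (Suc i mod n)}"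
  let ?B = "{j. j < n \<and> ?g j \<noteq> 0 \<and> ?g (Suc j mod n) \<noteq> 0 \<and> ?g j \<noteq> ?g (Suc j mod n)}"
  have ne: "i \<noteq> Suc i mod n" using assms by auto
  have sub: "?A \<subset> ?B"
  proof
    show "?A \<subseteq> ?B" using assms by auto
    have "i \<in> ?B" using assms ne by auto
    moreover have "i \<notin> ?A" using assms by auto
    ultimately show "?A \<noteq> ?B" by blast
  qed
  have "dis n f < dis n ?g" unfolding dis_def by (rule psubset_card_mono[OF _ sub]) auto
  thus ?thesis by simp
qed

lemma adj:
  assumes "v < n" "f v \<noteq> 0" "u < n" "f u = 0"
  shows "\<exists>i<n. f i \<noteq> 0 \<and> f (Suc i mod n) = 0"
proof (rule ccontr)
  assume "\<not> ?thesis"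
  hence H: "\<And>i. i < n \<Longrightarrow> f i \<noteq> 0 \<Longrightarrow> f (Suc i mod n) \<noteq> 0" by auto
  have "f ((v + k) mod n) \<noteq> 0" for k
  proof (induction k)
    case 0 then show ?case using assms by simp
  next
    case (Suc k)
    have "(v + Suc k) mod n = Suc ((v + k) mod n) mod n" by (simp add: mod_Suc_eq)
    moreover have "(v + k) mod n < n" using assms by simp
    ultimately show ?case using H Suc by simp
  qed
  from this[of "n - v + u"] have "f ((n + u) mod n) \<noteq> 0" using assms
    by (simp add: add.assoc[symmetric])
  thus False using assms by simp
qed



lemma score_cycle:
  assumes n3: "n \<ge> 3"
  shows "sg_score (cycle_edges n) f = (\<Sum>i<n. f i * f (Suc i mod n))"
proof -
  have sm: "Suc i mod n = (if Suc i = n then 0 else Suc i)" if "i < n" for i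
    using that by auto
  have E: "cycle_edges n = (\<lambda>i. {i, Suc i mod n}) ` {..<n}"
    unfolding cycle_edges_def by auto
  have inj: "inj_on (\<lambda>i. {i, Suc i mod n}) {..<n}"
  proof
    fix i j assume ij: "i \<in> {..<n}" "j \<in> {..<n}" "{i, Suc i mod n} = {j, Suc j mod n}"
    show "i = j"
    proof (rule ccontr)
      assume "i \<noteq> j"
      hence "i = Suc j mod n" "j = Suc i mod n" using ij(3) by (auto simp: doubleton_eq_iff)
      moreover have "i < n" "j < n" using ij by auto
      ultimately have a: "j = (if Suc i = n then 0 else Suc i)" and b: "i = (if Suc j = n then 0 else Suc j)"
        using sm[of i] sm[of j] by metis+
      show False
      proof (cases "Suc i = n")
        case True
        then have "j = 0" using a by simp
        then have "i = 1" using b n3 by simp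
        then show False using True n3 by simp
      next
        case False
        then have j: "j = Suc i" using a by simp
        show False
        proof (cases "Suc j = n")
          case True
          then have "i = 0" using b by simp
          then show False using True j n3 by simp
        next
          case False
          then have "i = Suc j" using b by simp
          then show False using j by simp
        qed
      qed
    qed
  qed
  have ne: "i \<noteq> Suc i mod n" if "i < n" for i using that sm[of i] n3 by auto
  have "sg_score (cycle_edges n) f = (\<Sum>i<n. \<Prod>v\<in>{i, Suc i mod n}. f v)"
    unfolding sg_score_def E by (simp add: sum.reindex[OF inj])
  also have "\<dots> = (\<Sum>i<n. f i * f (Suc i mod n))"
    by (rule sum.cong) (auto simp: ne)
  finally show ?thesis .
qed

lemma sum_pm: "(\<Sum>i<k. if P i then 1 else -1 :: int) = 2 * int (card {i. i < k \<and> P i}) - int k"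
proof (induction k)
  case 0 then show ?case by simp
next
  case (Suc k)
  have "{i. i < Suc k \<and> P i} = {i. i < k \<and> P i} \<union> (if P k then {k} else {})" by (auto simp: less_Suc_eq)
  then have "card {i. i < Suc k \<and> P i} = card {i. i < k \<and> P i} + (if P k then 1 else 0)"
    by (auto simp: card_insert_if)
  then show ?case using Suc by simp
qed

lemma rot_sum:
  assumes "n > 0"
  shows "(\<Sum>i<n. h (Suc i mod n)) = (\<Sum>i<n. h i :: int)"
proof -
  obtain m where m: "n = Suc m" using assms by (cases n) auto
  have "(\<Sum>i<Suc m. h (Suc i mod Suc m)) = (\<Sum>i<m. h (Suc i mod Suc m)) + h 0" by simp
  also have "(\<Sum>i<m. h (Suc i mod Suc m)) = (\<Sum>i<m. h (Suc i))" by (rule sum.cong) auto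
  also have "(\<Sum>i<m. h (Suc i)) + h 0 = (\<Sum>i<Suc m. h i)" by (subst sum.lessThan_Suc_shift) simp
  finally show ?thesis using m by simp
qed

lemma pm_mult: "(x::int) \<in> {1,-1} \<Longrightarrow> y \<in> {1,-1} \<Longrightarrow> x * y = (if x = y then 1 else -1)"
  by auto

definition full :: "nat \<Rightarrow> (nat \<Rightarrow> int) \<Rightarrow> bool" where
  "full n g = (\<forall>v<n. g v \<in> {1,-1})"

lemma full_agr:
  assumes "full n g" "n \<ge> 3"
  shows "sg_score (cycle_edges n) g = 2 * int (agr n g) - int n"
proof -
  have "sg_score (cycle_edges n) g = (\<Sum>i<n. if g i = g (Suc i mod n) then 1 else -1)"
    unfolding score_cycle[OF assms(2)]
  proof (rule sum.cong)
    fix i assume "i \<in> {..<n}"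
    moreover have "Suc i mod n < n" using assms by simp
    ultimately show "g i * g (Suc i mod n) = (if g i = g (Suc i mod n) then 1 else -1)"
      using assms(1) unfolding full_def by (intro pm_mult) auto
  qed simp
  also have "\<dots> = 2 * int (card {i. i < n \<and> g i = g (Suc i mod n)}) - int n" by (rule sum_pm)
  also have "{i. i < n \<and> g i = g (Suc i mod n)} = {i. i < n \<and> g i \<noteq> 0 \<and> g i = g (Suc i mod n)}"
    using assms by (auto simp: full_def)
  finally show ?thesis unfolding agr_def .
qed

lemma full_dis:
  assumes "full n g" "n \<ge> 3"
  shows "sg_score (cycle_edges n) g = int n - 2 * int (dis n g)"
proof -
  have fs: "Suc i mod n < n" for i using assms by simp
  have "sg_score (cycle_edges n) g = - (\<Sum>i<n. if g i \<noteq> g (Suc i mod n) then 1 else -1)"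
    unfolding score_cycle[OF assms(2)] sum_negf[symmetric]
  proof (rule sum.cong)
    fix i assume "i \<in> {..<n}"
    moreover have "Suc i mod n < n" using assms by simp
    ultimately have "g i * g (Suc i mod n) = (if g i = g (Suc i mod n) then 1 else -1)"
      using assms(1) unfolding full_def by (intro pm_mult) auto
    thus "g i * g (Suc i mod n) = - (if g i \<noteq> g (Suc i mod n) then 1 else -1)" by simp
  qed simp
  also have "\<dots> = - (2 * int (card {i. i < n \<and> g i \<noteq> g (Suc i mod n)}) - int n)" by (simp only: sum_pm)
  also have "{i. i < n \<and> g i \<noteq> g (Suc i mod n)} = {i. i < n \<and> g i \<noteq> 0 \<and> g (Suc i mod n) \<noteq> 0 \<and> g i \<noteq> g (Suc i mod n)}"
    using assms fs by (auto simp: full_def) (metis fs zero_neq_neg_one zero_neq_one)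
  finally show ?thesis unfolding dis_def by simp
qed

lemma full_mod4:
  assumes "full n g" "n \<ge> 3"
  shows "\<exists>k. sg_score (cycle_edges n) g = int n + 4 * k"
proof -
  let ?e = "\<lambda>i. (if g i = -1 \<and> g (Suc i mod n) = -1 then 1 else 0) :: int"
  let ?a = "\<lambda>i. (if g i = -1 then 1 else 0) :: int"
  have fs: "Suc i mod n < n" for i using assms by simp
  have t1: "g i * g (Suc i mod n) = g i + g (Suc i mod n) - 1 + 4 * ?e i" if "i < n" for i
  proof -
    have "g i \<in> {1,-1}" "g (Suc i mod n) \<in> {1,-1}" using assms that fs[of i] unfolding full_def by auto
    thus ?thesis by auto
  qed
  have t2: "g i = 1 - 2 * ?a i" if "i < n" for i using assms that unfolding full_def by auto
  have "sg_score (cycle_edges n) g = (\<Sum>i<n. g i + g (Suc i mod n) - 1 + 4 * ?e i)"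
    unfolding score_cycle[OF assms(2)] by (rule sum.cong) (auto simp: t1)
  also have "\<dots> = (\<Sum>i<n. g i) + (\<Sum>i<n. g (Suc i mod n)) - int n + 4 * (\<Sum>i<n. ?e i)"
    by (simp add: sum.distrib sum_subtractf sum_distrib_left)
  also have "(\<Sum>i<n. g (Suc i mod n)) = (\<Sum>i<n. g i)" using assms by (intro rot_sum) auto
  also have "(\<Sum>i<n. g i) = (\<Sum>i<n. 1 - 2 * ?a i)" by (rule sum.cong) (auto simp: t2)
  also have "\<dots> = int n - 2 * (\<Sum>i<n. ?a i)" by (simp add: sum_subtractf sum_distrib_left)
  finally have "sg_score (cycle_edges n) g = int n + 4 * ((\<Sum>i<n. ?e i) - (\<Sum>i<n. ?a i))"
    by (simp add: algebra_simps)
  thus ?thesis by blast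
qed



definition valid :: "(nat \<Rightarrow> int) \<Rightarrow> bool" where
  "valid f = (\<forall>v. f v \<in> {-1,0,1})"

lemma valid_full:
  assumes "valid g" "unas n g = {}" shows "full n g"
  unfolding full_def
proof (intro allI impI)
  fix v assume "v < n"
  hence "g v \<noteq> 0" using assms(2) unfolding unas_def by blast
  moreover have "g v \<in> {-1,0,1}" using assms(1) unfolding valid_def by blast
  ultimately show "g v \<in> {1,-1}" by blast
qed

lemma P_guar:
  fixes n K :: nat and c :: int
  assumes n3: "n \<ge> 3"
    and H: "\<And>g. full n g \<Longrightarrow> K \<le> agr n g \<Longrightarrow> c \<le> sgn (sg_score (cycle_edges n) g)"
  shows "valid f \<Longrightarrow> card (unas n f) = m \<Longrightarrow> K \<le> agr n f + m div 2
     \<Longrightarrow> c \<le> sg_val m {0..<n} (cycle_edges n) False f"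
proof (induction m arbitrary: f rule: less_induct)
  case (less m)
  show ?case
  proof (cases m)
    case 0
    then have "unas n f = {}" using less.prems(2) unas_fin by auto
    hence "full n f" using less.prems(1) by (intro valid_full)
    then show ?thesis using H 0 less.prems by simp
  next
    case (Suc m')
    then obtain v where v: "v \<in> unas n f" using less.prems(2) by (cases "unas n f = {}") auto
    show ?thesis unfolding Suc
    proof (rule Nmove_ge[where v=v])
      show "finite {0..<n}" by simp
      show "v \<in> {0..<n}" "f v = 0" using v unfolding unas_def by auto
      fix w s assume w: "w \<in> {0..<n}" "f w = 0" and s: "s \<in> {1::int,-1}"
      let ?f = "f(w:=s)"
      have vf: "valid ?f" using less.prems(1) s unfolding valid_def by auto
      have cu: "card (unas n ?f) = m'"
      proof -
        have "unas n ?f = unas n f - {w}" by (rule unas_upd) (use w s in auto)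
        moreover have "w \<in> unas n f" using w unfolding unas_def by auto
        ultimately show ?thesis using less.prems(2) Suc by (simp add: unas_fin)
      qed
      have mo: "agr n f \<le> agr n ?f" by (rule agr_mono) (use w in auto)
      show "c \<le> sg_val m' {0..<n} (cycle_edges n) True ?f"
      proof (cases m')
        case 0
        then have "unas n ?f = {}" using cu unas_fin by auto
        hence "full n ?f" using vf by (intro valid_full)
        moreover have "K \<le> agr n ?f" using less.prems(3) Suc 0 mo by simp
        ultimately show ?thesis using H 0 by simp
      next
        case (Suc m'')
        then obtain u where u: "u \<in> unas n ?f" using cu by (cases "unas n ?f = {}") auto
        have "\<exists>i<n. ?f i \<noteq> 0 \<and> ?f (Suc i mod n) = 0"
          by (rule adj[of w n "f(w:=s)" u]) (use w s u in \<open>auto simp: unas_def\<close>)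
        then obtain i where i: "i < n" "?f i \<noteq> 0" "?f (Suc i mod n) = 0" by blast
        let ?g = "?f(Suc i mod n := ?f i)"
        have "?f i \<in> {-1,0,1}" using vf unfolding valid_def by blast
        hence si: "?f i \<in> {1,-1}" using i(2) by blast
        have sn: "Suc i mod n < n" using n3 by simp
        show ?thesis unfolding Suc
        proof (rule Pmove_ge[where v="Suc i mod n" and s="?f i"])
          show "finite {0..<n}" "Suc i mod n \<in> {0..<n}" "?f (Suc i mod n) = 0" "?f i \<in> {1,-1}"
            using sn i si by auto
          have vg: "valid ?g" using vf si unfolding valid_def by auto
          have cg: "card (unas n ?g) = m''"
          proof -
            have "unas n ?g = unas n ?f - {Suc i mod n}" by (rule unas_upd) (use i sn si in auto)
            moreover have "Suc i mod n \<in> unas n ?f" using i sn unfolding unas_def by auto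
            ultimately show ?thesis using cu Suc by (simp add: unas_fin)
          qed
          have st: "agr n ?f + 1 \<le> agr n ?g" by (rule agr_step) (use i in auto)
          have kk: "K \<le> agr n ?g + m'' div 2" using less.prems(3) \<open>m = Suc m'\<close> Suc mo st by simp
          have "m'' < m" using \<open>m = Suc m'\<close> Suc by simp
          then show "c \<le> sg_val m'' {0..<n} (cycle_edges n) False ?g"
            by (rule less.IH[OF _ vg cg kk])
        qed
      qed
    qed
  qed
qed

lemma N_guar:
  fixes n K :: nat and c :: int
  assumes n3: "n \<ge> 3"
    and H: "\<And>g. full n g \<Longrightarrow> K \<le> dis n g \<Longrightarrow> sgn (sg_score (cycle_edges n) g) \<le> c"
  shows "valid f \<Longrightarrow> card (unas n f) = m \<Longrightarrow> K \<le> dis n f + m div 2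
     \<Longrightarrow> sg_val m {0..<n} (cycle_edges n) True f \<le> c"
proof (induction m arbitrary: f rule: less_induct)
  case (less m)
  show ?case
  proof (cases m)
    case 0
    then have "unas n f = {}" using less.prems(2) unas_fin by auto
    hence "full n f" using less.prems(1) by (intro valid_full)
    then show ?thesis using H 0 less.prems by simp
  next
    case (Suc m')
    then obtain v where v: "v \<in> unas n f" using less.prems(2) by (cases "unas n f = {}") auto
    show ?thesis unfolding Suc
    proof (rule Pmove_le[where v=v])
      show "finite {0..<n}" by simp
      show "v \<in> {0..<n}" "f v = 0" using v unfolding unas_def by auto
      fix w s assume w: "w \<in> {0..<n}" "f w = 0" and s: "s \<in> {1::int,-1}"
      let ?f = "f(w:=s)"
      have vf: "valid ?f" using less.prems(1) s unfolding valid_def by auto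
      have cu: "card (unas n ?f) = m'"
      proof -
        have "unas n ?f = unas n f - {w}" by (rule unas_upd) (use w s in auto)
        moreover have "w \<in> unas n f" using w unfolding unas_def by auto
        ultimately show ?thesis using less.prems(2) Suc by (simp add: unas_fin)
      qed
      have mo: "dis n f \<le> dis n ?f" by (rule dis_mono) (use w in auto)
      show "sg_val m' {0..<n} (cycle_edges n) False ?f \<le> c"
      proof (cases m')
        case 0
        then have "unas n ?f = {}" using cu unas_fin by auto
        hence "full n ?f" using vf by (intro valid_full)
        moreover have "K \<le> dis n ?f" using less.prems(3) Suc 0 mo by simp
        ultimately show ?thesis using H 0 by simp
      next
        case (Suc m'')
        then obtain u where u: "u \<in> unas n ?f" using cu by (cases "unas n ?f = {}") auto
        have "\<exists>i<n. ?f i \<noteq> 0 \<and> ?f (Suc i mod n) = 0"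
          by (rule adj[of w n "f(w:=s)" u]) (use w s u in \<open>auto simp: unas_def\<close>)
        then obtain i where i: "i < n" "?f i \<noteq> 0" "?f (Suc i mod n) = 0" by blast
        let ?g = "?f(Suc i mod n := - ?f i)"
        have "?f i \<in> {-1,0,1}" using vf unfolding valid_def by blast
        hence si: "- ?f i \<in> {1,-1}" using i(2) by auto
        have sn: "Suc i mod n < n" using n3 by simp
        show ?thesis unfolding Suc
        proof (rule Nmove_le[where v="Suc i mod n" and s="- ?f i"])
          show "finite {0..<n}" "Suc i mod n \<in> {0..<n}" "?f (Suc i mod n) = 0" "- ?f i \<in> {1,-1}"
            using sn i si by auto
          have vg: "valid ?g" using vf si unfolding valid_def by auto
          have cg: "card (unas n ?g) = m''"
          proof -
            have "unas n ?g = unas n ?f - {Suc i mod n}" by (rule unas_upd) (use i sn si in auto)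
            moreover have "Suc i mod n \<in> unas n ?f" using i sn unfolding unas_def by auto
            ultimately show ?thesis using cu Suc by (simp add: unas_fin)
          qed
          have st: "dis n ?f + 1 \<le> dis n ?g" by (rule dis_step) (use i in auto)
          have kk: "K \<le> dis n ?g + m'' div 2" using less.prems(3) \<open>m = Suc m'\<close> Suc mo st by simp
          have "m'' < m" using \<open>m = Suc m'\<close> Suc by simp
          then show "sg_val m'' {0..<n} (cycle_edges n) True ?g \<le> c"
            by (rule less.IH[OF _ vg cg kk])
        qed
      qed
    qed
  qed
qed



lemma f0_facts: "valid (\<lambda>_. 0)" "card (unas n (\<lambda>_. 0)) = n"
proof -
  show "valid (\<lambda>_. 0)" unfolding valid_def by simp
  have "unas n (\<lambda>_. 0) = {..<n}" unfolding unas_def by auto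
  thus "card (unas n (\<lambda>_. 0)) = n" by simp
qed

lemma P_second:
  assumes n3: "n \<ge> 3"
    and H: "\<And>g. full n g \<Longrightarrow> K \<le> agr n g \<Longrightarrow> c \<le> sgn (sg_score (cycle_edges n) g)"
    and K: "K \<le> n div 2"
  shows "c \<le> sign_game_outcome (cycle_vertices n) (cycle_edges n) False"
  unfolding sign_game_outcome_def cycle_vertices_def
  using P_guar[OF n3 H f0_facts(1) f0_facts(2)] K by simp

lemma N_second:
  assumes n3: "n \<ge> 3"
    and H: "\<And>g. full n g \<Longrightarrow> K \<le> dis n g \<Longrightarrow> sgn (sg_score (cycle_edges n) g) \<le> c"
    and K: "K \<le> n div 2"
  shows "sign_game_outcome (cycle_vertices n) (cycle_edges n) True \<le> c"
  unfolding sign_game_outcome_def cycle_vertices_def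
  using N_guar[OF n3 H f0_facts(1) f0_facts(2)] K by simp

lemma f1_facts: assumes "n \<ge> 1" "s \<in> {1,-1}"
  shows "valid ((\<lambda>_. 0)(0 := s))" "card (unas n ((\<lambda>_. 0)(0 := s))) = n - 1"
proof -
  show "valid ((\<lambda>_. 0)(0 := s))" using assms unfolding valid_def by auto
  have "unas n ((\<lambda>_. 0)(0 := s)) = {..<n} - {0}" unfolding unas_def using assms by auto
  thus "card (unas n ((\<lambda>_. 0)(0 := s))) = n - 1" using assms by simp
qed

lemma P_first:
  assumes n3: "n \<ge> 3"
    and H: "\<And>g. full n g \<Longrightarrow> K \<le> agr n g \<Longrightarrow> c \<le> sgn (sg_score (cycle_edges n) g)"
    and K: "K \<le> (n - 1) div 2"
  shows "c \<le> sign_game_outcome (cycle_vertices n) (cycle_edges n) True"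
proof -
  have "c \<le> sg_val (Suc (n - 1)) {0..<n} (cycle_edges n) True (\<lambda>_. 0)"
  proof (rule Pmove_ge[where v=0 and s=1])
    show "c \<le> sg_val (n - 1) {0..<n} (cycle_edges n) False ((\<lambda>_. 0)(0 := 1))"
      proof -
      have v1: "valid ((\<lambda>_. 0)(0 := (1::int)))" and c1: "card (unas n ((\<lambda>_. 0)(0 := (1::int)))) = n - 1"
        using f1_facts[of n "1::int"] n3 by auto
      show ?thesis using P_guar[OF n3 H v1 c1] K by simp
    qed
  qed (use n3 in auto)
  moreover have "Suc (n - 1) = n" using n3 by simp
  ultimately show ?thesis unfolding sign_game_outcome_def cycle_vertices_def by simp
qed

lemma N_first:
  assumes n3: "n \<ge> 3"
    and H: "\<And>g. full n g \<Longrightarrow> K \<le> dis n g \<Longrightarrow> sgn (sg_score (cycle_edges n) g) \<le> c"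
    and K: "K \<le> (n - 1) div 2"
  shows "sign_game_outcome (cycle_vertices n) (cycle_edges n) False \<le> c"
proof -
  have "sg_val (Suc (n - 1)) {0..<n} (cycle_edges n) False (\<lambda>_. 0) \<le> c"
  proof (rule Nmove_le[where v=0 and s=1])
    show "sg_val (n - 1) {0..<n} (cycle_edges n) True ((\<lambda>_. 0)(0 := 1)) \<le> c"
      proof -
      have v1: "valid ((\<lambda>_. 0)(0 := (1::int)))" and c1: "card (unas n ((\<lambda>_. 0)(0 := (1::int)))) = n - 1"
        using f1_facts[of n "1::int"] n3 by auto
      show ?thesis using N_guar[OF n3 H v1 c1] K by simp
    qed
  qed (use n3 in auto)
  moreover have "Suc (n - 1) = n" using n3 by simp
  ultimately show ?thesis unfolding sign_game_outcome_def cycle_vertices_def by simp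
qed

lemma Pboth:
  assumes n3: "n \<ge> 3"
    and H: "\<And>g. full n g \<Longrightarrow> K \<le> agr n g \<Longrightarrow> c \<le> sgn (sg_score (cycle_edges n) g)"
    and K: "K \<le> (n - 1) div 2"
  shows "c \<le> sign_game_outcome (cycle_vertices n) (cycle_edges n) pf"
  using P_first[OF n3 H K] P_second[OF n3 H] K by (cases pf) auto

lemma Nboth:
  assumes n3: "n \<ge> 3"
    and H: "\<And>g. full n g \<Longrightarrow> K \<le> dis n g \<Longrightarrow> sgn (sg_score (cycle_edges n) g) \<le> c"
    and K: "K \<le> (n - 1) div 2"
  shows "sign_game_outcome (cycle_vertices n) (cycle_edges n) pf \<le> c"
  using N_first[OF n3 H K] N_second[OF n3 H] K by (cases pf) auto

lemma triv_lo: "n \<ge> 3 \<Longrightarrow> -1 \<le> sign_game_outcome (cycle_vertices n) (cycle_edges n) pf"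
  by (rule Pboth[where K=0]) (auto simp: sgn_if)

lemma triv_hi: "n \<ge> 3 \<Longrightarrow> sign_game_outcome (cycle_vertices n) (cycle_edges n) pf \<le> 1"
  by (rule Nboth[where K=0]) (auto simp: sgn_if)

lemma facts:
  assumes "full n g" "n \<ge> 3"
  obtains k where "sg_score (cycle_edges n) g = 2 * int (agr n g) - int n"
    "sg_score (cycle_edges n) g = int n - 2 * int (dis n g)"
    "sg_score (cycle_edges n) g = int n + 4 * k"
  using full_agr[OF assms] full_dis[OF assms] full_mod4[OF assms] by blast


lemma a0: "(a::int) \<ge> 2*q - 1 \<Longrightarrow> S = 2*a - 4*q \<Longrightarrow> S = 4*q + 4*k \<Longrightarrow> 0 \<le> S" by presburger
lemma a0n: "(a::int) \<ge> 2*q - 1 \<Longrightarrow> S = 4*q - 2*a \<Longrightarrow> S = 4*q + 4*k \<Longrightarrow> S \<le> 0" by presburger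
lemma a1: "(a::int) \<ge> 2*q \<Longrightarrow> S = 2*a - (4*q+1) \<Longrightarrow> S = 4*q + 1 + 4*k \<Longrightarrow> 0 < S" by presburger
lemma a3: "(a::int) \<ge> 2*q+1 \<Longrightarrow> S = (4*q+3) - 2*a \<Longrightarrow> S = 4*q + 3 + 4*k \<Longrightarrow> S < 0" by presburger
lemma a2: "(a::int) \<ge> 2*q+1 \<Longrightarrow> S = 2*a - (4*q+2) \<Longrightarrow> S = 4*q + 2 + 4*k \<Longrightarrow> 0 < S" by presburger
lemma a2n: "(a::int) \<ge> 2*q+1 \<Longrightarrow> S = (4*q+2) - 2*a \<Longrightarrow> S = 4*q + 2 + 4*k \<Longrightarrow> S < 0" by presburger

lemma d0: "(n::nat) = 4*q \<Longrightarrow> 3 \<le> n \<Longrightarrow> int ((n-1) div 2) = 2 * int q - 1" by presburger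
lemma d1: "(n::nat) = 4*q+1 \<Longrightarrow> int ((n-1) div 2) = 2 * int q" by presburger
lemma d3: "(n::nat) = 4*q+3 \<Longrightarrow> int ((n-1) div 2) = 2 * int q + 1" by presburger
lemma d2: "(n::nat) = 4*q+2 \<Longrightarrow> int (n div 2) = 2 * int q + 1" by presburger
lemma dq: "(n::nat) = 4 * (n div 4) + n mod 4" by simp

theorem theorem6:
  fixes n :: nat
  assumes "n \<ge> 3"
  shows "(n mod 4 = 0 \<longrightarrow> (\<forall>pf. sign_game_outcome (cycle_vertices n) (cycle_edges n) pf = 0))
       \<and> (n mod 4 = 1 \<longrightarrow> (\<forall>pf. sign_game_outcome (cycle_vertices n) (cycle_edges n) pf = 1))
       \<and> (n mod 4 = 2 \<longrightarrow> (\<forall>pf. sign_game_outcome (cycle_vertices n) (cycle_edges n) pf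
                                 = (if pf then -1 else 1)))
       \<and> (n mod 4 = 3 \<longrightarrow> (\<forall>pf. sign_game_outcome (cycle_vertices n) (cycle_edges n) pf = -1))"
proof (intro conjI impI allI)
  fix pf
  let ?O = "sign_game_outcome (cycle_vertices n) (cycle_edges n)"
  let ?S = "\<lambda>g. sg_score (cycle_edges n) g"
  define q where "q = n div 4"
  have nq: "n = 4 * q + n mod 4" unfolding q_def by (rule dq)
  {
    assume m: "n mod 4 = 0"
    have nq0: "n = 4 * q" using nq m by simp
    have nI: "int n = 4 * int q" using nq0 by simp
    have "0 \<le> ?O pf"
    proof (rule Pboth[OF assms _ order.refl])
      fix g assume g: "full n g" "(n - 1) div 2 \<le> agr n g"
      obtain k where s1: "?S g = 2 * int (agr n g) - int n" and s2: "?S g = int n + 4 * k" using facts[OF g(1) assms] by metis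
      have "int ((n - 1) div 2) \<le> int (agr n g)" using g(2) by simp
      hence "2 * int q - 1 \<le> int (agr n g)" using d0[OF nq0 assms] by simp
      hence "0 \<le> ?S g" using a0[of "int q" "int (agr n g)" "?S g" k] s1 s2 nI by simp
      thus "0 \<le> sgn (?S g)" by (simp add: sgn_if)
    qed
    moreover have "?O pf \<le> 0"
    proof (rule Nboth[OF assms _ order.refl])
      fix g assume g: "full n g" "(n - 1) div 2 \<le> dis n g"
      obtain k where s1: "?S g = int n - 2 * int (dis n g)" and s2: "?S g = int n + 4 * k" using facts[OF g(1) assms] by metis
      have "int ((n - 1) div 2) \<le> int (dis n g)" using g(2) by simp
      hence "2 * int q - 1 \<le> int (dis n g)" using d0[OF nq0 assms] by simp
      hence "?S g \<le> 0" using a0n[of "int q" "int (dis n g)" "?S g" k] s1 s2 nI by simp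
      thus "sgn (?S g) \<le> 0" by (simp add: sgn_if)
    qed
    ultimately show "?O pf = 0" by simp
  }
  {
    assume m: "n mod 4 = 1"
    have nq0: "n = 4 * q + 1" using nq m by simp
    have nI: "int n = 4 * int q + 1" using nq0 by simp
    have "1 \<le> ?O pf"
    proof (rule Pboth[OF assms _ order.refl])
      fix g assume g: "full n g" "(n - 1) div 2 \<le> agr n g"
      obtain k where s1: "?S g = 2 * int (agr n g) - int n" and s2: "?S g = int n + 4 * k" using facts[OF g(1) assms] by metis
      have "int ((n - 1) div 2) \<le> int (agr n g)" using g(2) by simp
      hence "2 * int q \<le> int (agr n g)" using d1[OF nq0] by simp
      hence "0 < ?S g" using a1[of "int q" "int (agr n g)" "?S g" k] s1 s2 nI by simp
      thus "1 \<le> sgn (?S g)" by (simp add: sgn_if)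
    qed
    thus "?O pf = 1" using triv_hi[OF assms, of pf] by simp
  }
  {
    assume m: "n mod 4 = 3"
    have nq0: "n = 4 * q + 3" using nq m by simp
    have nI: "int n = 4 * int q + 3" using nq0 by simp
    have "?O pf \<le> -1"
    proof (rule Nboth[OF assms _ order.refl])
      fix g assume g: "full n g" "(n - 1) div 2 \<le> dis n g"
      obtain k where s1: "?S g = int n - 2 * int (dis n g)" and s2: "?S g = int n + 4 * k" using facts[OF g(1) assms] by metis
      have "int ((n - 1) div 2) \<le> int (dis n g)" using g(2) by simp
      hence "2 * int q + 1 \<le> int (dis n g)" using d3[OF nq0] by simp
      hence "?S g < 0" using a3[of "int q" "int (dis n g)" "?S g" k] s1 s2 nI by simp
      thus "sgn (?S g) \<le> -1" by (simp add: sgn_if)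
    qed
    thus "?O pf = -1" using triv_lo[OF assms, of pf] by simp
  }
  {
    assume m: "n mod 4 = 2"
    have nq0: "n = 4 * q + 2" using nq m by simp
    have nI: "int n = 4 * int q + 2" using nq0 by simp
    have HP: "1 \<le> sgn (?S g)" if g: "full n g" "n div 2 \<le> agr n g" for g
    proof -
      obtain k where s1: "?S g = 2 * int (agr n g) - int n" and s2: "?S g = int n + 4 * k" using facts[OF g(1) assms] by metis
      have "int (n div 2) \<le> int (agr n g)" using g(2) by simp
      hence "2 * int q + 1 \<le> int (agr n g)" using d2[OF nq0] by simp
      hence "0 < ?S g" using a2[of "int q" "int (agr n g)" "?S g" k] s1 s2 nI by simp
      thus "1 \<le> sgn (?S g)" by (simp add: sgn_if)
    qed
    have HN: "sgn (?S g) \<le> -1" if g: "full n g" "n div 2 \<le> dis n g" for g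
    proof -
      obtain k where s1: "?S g = int n - 2 * int (dis n g)" and s2: "?S g = int n + 4 * k" using facts[OF g(1) assms] by metis
      have "int (n div 2) \<le> int (dis n g)" using g(2) by simp
      hence "2 * int q + 1 \<le> int (dis n g)" using d2[OF nq0] by simp
      hence "?S g < 0" using a2n[of "int q" "int (dis n g)" "?S g" k] s1 s2 nI by simp
      thus "sgn (?S g) \<le> -1" by (simp add: sgn_if)
    qed
    have "1 \<le> ?O False" by (rule P_second[OF assms HP order.refl])
    moreover have "?O True \<le> -1" by (rule N_second[OF assms HN order.refl])
    ultimately show "?O pf = (if pf then -1 else 1)"
      using triv_hi[OF assms, of False] triv_lo[OF assms, of True] by (cases pf) auto
  }
qed

end
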